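(* Let $k$ be a field and let $A$ be a $k$-algebra with two graded algebra decompositions $A=\bigoplus_{i=0}^{\infty}A_i=\bigoplus_{i=0}^{\infty}B_i$ (each a grading making $A$ a graded algebra) such that (1) $A_0=B_0=k$; (2) $A$ is generated as an algebra by $A_1$, and also generated as an algebra by $B_1$; (3) either $A_1$ or $B_1$ is finite dimensional over $k$. Then there is an algebra automorphism $\phi:A\to A$ such that $\phi(A_i)=B_i$ for all $i$.
   Context: All algebras are associative unital $k$-algebras. *)

theory Defs
  imports Main "HOL.Vector_Spaces"
begin

definition k_algebra :: "('k::field \<Rightarrow> 'a::ring_1 \<Rightarrow> 'a) \<Rightarrow> bool" where
  "k_algebra scale \<longleftrightarrow> module scale \<and>
     (\<forall>c x y. scale c (x * y) = scale c x * y \<and> scale c (x * y) = x * scale c y)"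

definition graded_decomp :: "('k::field \<Rightarrow> 'a::ring_1 \<Rightarrow> 'a) \<Rightarrow> (nat \<Rightarrow> 'a set) \<Rightarrow> bool" where
  "graded_decomp scale G \<longleftrightarrow>
     (\<forall>i. module.subspace scale (G i)) \<and>
     (\<forall>x. \<exists>!f. finite {i. f i \<noteq> 0} \<and> (\<forall>i. f i \<in> G i) \<and> x = (\<Sum>i\<in>{i. f i \<noteq> 0}. f i)) \<and>
     1 \<in> G 0 \<and>
     (\<forall>i j x y. x \<in> G i \<longrightarrow> y \<in> G j \<longrightarrow> x * y \<in> G (i + j))"

inductive_set subalg_gen :: "('k::field \<Rightarrow> 'a::ring_1 \<Rightarrow> 'a) \<Rightarrow> 'a set \<Rightarrow> 'a set"
  for scale :: "'k \<Rightarrow> 'a \<Rightarrow> 'a" and S :: "'a set" where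
  gen: "x \<in> S \<Longrightarrow> x \<in> subalg_gen scale S"
| one: "1 \<in> subalg_gen scale S"
| zero: "0 \<in> subalg_gen scale S"
| add: "x \<in> subalg_gen scale S \<Longrightarrow> y \<in> subalg_gen scale S \<Longrightarrow> x + y \<in> subalg_gen scale S"
| mult: "x \<in> subalg_gen scale S \<Longrightarrow> y \<in> subalg_gen scale S \<Longrightarrow> x * y \<in> subalg_gen scale S"
| smult: "x \<in> subalg_gen scale S \<Longrightarrow> scale c x \<in> subalg_gen scale S"

definition fin_dim :: "('k::field \<Rightarrow> 'a::ring_1 \<Rightarrow> 'a) \<Rightarrow> 'a set \<Rightarrow> bool" where
  "fin_dim scale V \<longleftrightarrow> (\<exists>F. finite F \<and> F \<subseteq> V \<and> V \<subseteq> module.span scale F)"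

definition alg_automorphism :: "('k::field \<Rightarrow> 'a::ring_1 \<Rightarrow> 'a) \<Rightarrow> ('a \<Rightarrow> 'a) \<Rightarrow> bool" where
  "alg_automorphism scale \<phi> \<longleftrightarrow> bij \<phi> \<and> \<phi> 1 = 1 \<and>
     (\<forall>x y. \<phi> (x + y) = \<phi> x + \<phi> y) \<and> (\<forall>x y. \<phi> (x * y) = \<phi> x * \<phi> y) \<and>
     (\<forall>c x. \<phi> (scale c x) = scale c (\<phi> x))"

end

theory Submission
  imports Defs
begin


locale galg = vector_space scale for scale :: "'k::field \<Rightarrow> 'a::ring_1 \<Rightarrow> 'a" +
  assumes smult_left: "scale c (x * y) = scale c x * y"
    and smult_right: "scale c (x * y) = x * scale c y"
begin

lemma span_mult_closed:
  assumes a: "a \<in> span X" and b: "b \<in> span Y"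
    and XY: "\<And>x y. x \<in> X \<Longrightarrow> y \<in> Y \<Longrightarrow> x * y \<in> span W"
  shows "a * b \<in> span W"
proof -
  have inner: "x * b \<in> span W" if x: "x \<in> X" for x
    using b
  proof (induct rule: span_induct)
    case (step y) then show ?case using XY x by auto
  next
    case base show ?case
      by (rule subspaceI) (auto simp: distrib_left span_add smult_right[symmetric] span_scale span_zero)
  qed
  show ?thesis using a
  proof (induct rule: span_induct)
    case (step x) then show ?case using inner by auto
  next
    case base show ?case
      by (rule subspaceI) (auto simp: distrib_right span_add smult_left[symmetric] span_scale span_zero)
  qed
qed

lemma scal_left: "scale c 1 * y = scale c y"
  using smult_left[of c 1 y] by simp
lemma scal_right: "y * scale c 1 = scale c y"
  using smult_right[of c y 1] by simp

end

locale grading = galg scale for scale :: "'k::field \<Rightarrow> 'a::ring_1 \<Rightarrow> 'a" +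
  fixes G :: "nat \<Rightarrow> 'a set"
  assumes gr: "graded_decomp scale G"
begin

lemma G_sub: "subspace (G i)" using gr unfolding graded_decomp_def by auto
lemma G_ex1: "\<exists>!f. finite {i. f i \<noteq> 0} \<and> (\<forall>i. f i \<in> G i) \<and> x = (\<Sum>i\<in>{i. f i \<noteq> 0}. f i)"
  using gr unfolding graded_decomp_def by auto
lemma G_one: "1 \<in> G 0" using gr unfolding graded_decomp_def by auto
lemma G_mult: "x \<in> G i \<Longrightarrow> y \<in> G j \<Longrightarrow> x * y \<in> G (i + j)"
  using gr unfolding graded_decomp_def by auto
lemma G_0[simp]: "0 \<in> G i" using G_sub subspace_0 by blast
lemma G_add: "x \<in> G i \<Longrightarrow> y \<in> G i \<Longrightarrow> x + y \<in> G i" using G_sub subspace_add by blast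
lemma G_scale: "x \<in> G i \<Longrightarrow> scale c x \<in> G i" using G_sub subspace_scale by blast
lemma G_diff: "x \<in> G i \<Longrightarrow> y \<in> G i \<Longrightarrow> x - y \<in> G i" using G_sub subspace_diff by blast
lemma G_sum: "(\<And>j. j \<in> S \<Longrightarrow> f j \<in> G i) \<Longrightarrow> sum f S \<in> G i" using G_sub subspace_sum by blast

definition decomp :: "'a \<Rightarrow> nat \<Rightarrow> 'a" where
  "decomp x = (THE f. finite {i. f i \<noteq> 0} \<and> (\<forall>i. f i \<in> G i) \<and> x = (\<Sum>i\<in>{i. f i \<noteq> 0}. f i))"

definition comp :: "nat \<Rightarrow> 'a \<Rightarrow> 'a" where "comp i x = decomp x i"

lemma decomp_ok: "finite {i. decomp x i \<noteq> 0} \<and> (\<forall>i. decomp x i \<in> G i) \<and> x = (\<Sum>i\<in>{i. decomp x i \<noteq> 0}. decomp x i)"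
  unfolding decomp_def by (rule theI' [OF G_ex1])

lemma supp_fin: "finite {i. comp i x \<noteq> 0}"
  using decomp_ok unfolding comp_def by blast

lemma comp_in[simp]: "comp i x \<in> G i"
  using decomp_ok unfolding comp_def by blast

lemma comp_repr: assumes "finite S" "{i. comp i x \<noteq> 0} \<subseteq> S" shows "x = (\<Sum>i\<in>S. comp i x)"
proof -
  have "x = (\<Sum>i\<in>{i. comp i x \<noteq> 0}. comp i x)" using decomp_ok unfolding comp_def by blast
  also have "\<dots> = (\<Sum>i\<in>S. comp i x)"
    by (rule sum.mono_neutral_left) (use assms in auto)
  finally show ?thesis .
qed

lemma comp_unique:
  assumes S: "finite S" and fG: "\<And>i. f i \<in> G i" and f0: "\<And>i. i \<notin> S \<Longrightarrow> f i = 0"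
    and x: "x = (\<Sum>i\<in>S. f i)"
  shows "comp i x = f i"
proof -
  have sub: "{i. f i \<noteq> 0} \<subseteq> S" using f0 by auto
  have fin: "finite {i. f i \<noteq> 0}" using sub S finite_subset by blast
  have x': "x = (\<Sum>i\<in>{i. f i \<noteq> 0}. f i)"
    unfolding x by (rule sum.mono_neutral_right) (use S sub in auto)
  have "decomp x = f"
    unfolding decomp_def
    by (rule the1_equality[OF G_ex1]) (use fin fG x' in auto)
  then show ?thesis unfolding comp_def by simp
qed

lemma comp_homog: assumes "x \<in> G j" shows "comp i x = (if i = j then x else 0)"
  by (rule comp_unique[of "{j}"]) (use assms in auto)

lemma comp_add: "comp i (x + y) = comp i x + comp i y"
proof -
  let ?S = "{i. comp i x \<noteq> 0} \<union> {i. comp i y \<noteq> 0}"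
  have fin: "finite ?S" using supp_fin by auto
  show ?thesis
  proof (rule comp_unique[OF fin])
    show "\<And>i. comp i x + comp i y \<in> G i" by (simp add: G_add)
    show "\<And>i. i \<notin> ?S \<Longrightarrow> comp i x + comp i y = 0" by auto
    have "x = (\<Sum>i\<in>?S. comp i x)" "y = (\<Sum>i\<in>?S. comp i y)"
      by (rule comp_repr; use fin in auto)+
    then show "x + y = (\<Sum>i\<in>?S. comp i x + comp i y)" by (simp add: sum.distrib)
  qed
qed

lemma comp_scale: "comp i (scale c x) = scale c (comp i x)"
proof -
  let ?S = "{i. comp i x \<noteq> 0}"
  have fin: "finite ?S" using supp_fin by auto
  show ?thesis
  proof (rule comp_unique[OF fin])
    show "\<And>i. scale c (comp i x) \<in> G i" by (simp add: G_scale)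
    show "\<And>i. i \<notin> ?S \<Longrightarrow> scale c (comp i x) = 0" by auto
    have "x = (\<Sum>i\<in>?S. comp i x)" by (rule comp_repr; use fin in auto)
    then show "scale c x = (\<Sum>i\<in>?S. scale c (comp i x))" by (metis scale_sum_right)
  qed
qed

lemma mod: "module scale" by (simp add: module_iff_vector_space vector_space_axioms)

lemma comp_hom: "module_hom scale scale (comp i)"
  by (rule module_hom_iff[THEN iffD2]) (auto simp: comp_add comp_scale mod)

lemma comp_zero[simp]: "comp i 0 = 0" using comp_homog[of 0 0 i] by simp
lemma comp_neg: "comp i (- x) = - comp i x" using comp_add[of i x "-x"] by (simp add: eq_neg_iff_add_eq_0 add.commute)
lemma comp_diff: "comp i (x - y) = comp i x - comp i y"
  using comp_add[of i x "-y"] comp_neg by simp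
lemma comp_sum: "comp i (sum f S) = (\<Sum>j\<in>S. comp i (f j))"
  by (induct S rule: infinite_finite_induct) (auto simp: comp_add)

lemma comp_comp: "comp i (comp j x) = (if i = j then comp j x else 0)"
  by (rule comp_homog) simp

lemma all_zero: assumes "\<And>i. comp i x = 0" shows "x = 0"
  using comp_repr[of "{}" x] assms by auto

end



context grading begin

lemma comp_mult:
  assumes S: "finite S" "{i. comp i x \<noteq> 0} \<subseteq> S" and T: "finite T" "{i. comp i y \<noteq> 0} \<subseteq> T"
  shows "comp k (x * y) = (\<Sum>i\<in>S. \<Sum>j\<in>T. if i + j = k then comp i x * comp j y else 0)"
proof -
  have "x * y = (\<Sum>i\<in>S. comp i x) * (\<Sum>j\<in>T. comp j y)"
    using comp_repr[OF S] comp_repr[OF T] by simp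
  also have "\<dots> = (\<Sum>i\<in>S. \<Sum>j\<in>T. comp i x * comp j y)" by (rule sum_product)
  finally have "comp k (x * y) = (\<Sum>i\<in>S. \<Sum>j\<in>T. comp k (comp i x * comp j y))"
    by (simp add: comp_sum)
  also have "\<dots> = (\<Sum>i\<in>S. \<Sum>j\<in>T. if i + j = k then comp i x * comp j y else 0)"
    by (intro sum.cong refl) (simp add: comp_homog[OF G_mult[OF comp_in comp_in]] eq_commute)
  finally show ?thesis .
qed

lemma comp_mult_zero:
  assumes "\<And>i j. i + j = k \<Longrightarrow> comp i x = 0 \<or> comp j y = 0"
  shows "comp k (x * y) = 0"
proof -
  have "\<And>i j. (if i + j = k then comp i x * comp j y else 0) = 0" using assms by (metis mult_zero_left mult_zero_right)
  then show ?thesis using comp_mult[OF supp_fin order_refl supp_fin order_refl, of k x y] by simp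
qed

definition le :: "nat \<Rightarrow> 'a set" where "le n = {x. \<forall>i. n < i \<longrightarrow> comp i x = 0}"
definition ge :: "nat \<Rightarrow> 'a set" where "ge n = {x. \<forall>i. i < n \<longrightarrow> comp i x = 0}"
definition lt :: "nat \<Rightarrow> 'a set" where "lt n = {x. \<forall>i. n \<le> i \<longrightarrow> comp i x = 0}"

lemma mult_le: "x \<in> le a \<Longrightarrow> y \<in> le b \<Longrightarrow> x * y \<in> le (a + b)"
  unfolding le_def apply (auto intro!: comp_mult_zero) by (meson add_le_mono add_less_le_mono add_le_less_mono add_less_mono not_le not_less)
lemma mult_ge: "x \<in> ge a \<Longrightarrow> y \<in> ge b \<Longrightarrow> x * y \<in> ge (a + b)"
  unfolding ge_def apply (auto intro!: comp_mult_zero) by (meson add_le_mono add_less_le_mono add_le_less_mono add_less_mono not_le not_less)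
lemma mult_lt_le: "x \<in> lt a \<Longrightarrow> y \<in> le b \<Longrightarrow> x * y \<in> lt (a + b)"
  unfolding le_def lt_def apply (auto intro!: comp_mult_zero) by (meson add_le_mono add_less_le_mono add_le_less_mono add_less_mono not_le not_less)
lemma mult_le_lt: "x \<in> le a \<Longrightarrow> y \<in> lt b \<Longrightarrow> x * y \<in> lt (a + b)"
  unfolding le_def lt_def apply (auto intro!: comp_mult_zero) by (meson add_le_mono add_less_le_mono add_le_less_mono add_less_mono not_le not_less)

lemma sub_le: "subspace (le n)"
  unfolding le_def by (rule subspaceI) (auto simp: comp_add comp_scale)
lemma sub_ge: "subspace (ge n)"
  unfolding ge_def by (rule subspaceI) (auto simp: comp_add comp_scale)
lemma sub_lt: "subspace (lt n)"
  unfolding lt_def by (rule subspaceI) (auto simp: comp_add comp_scale)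

lemma G_le: "x \<in> G i \<Longrightarrow> x \<in> le i" unfolding le_def by (auto simp: comp_homog)
lemma G_ge: "x \<in> G i \<Longrightarrow> x \<in> ge i" unfolding ge_def by (auto simp: comp_homog)
lemma lt_Suc: "lt (Suc n) = le n" unfolding lt_def le_def by (auto simp: Suc_le_eq)
lemma lt_0: "x \<in> lt 0 \<Longrightarrow> x = 0" unfolding lt_def using all_zero by auto
lemma lt_le: "x \<in> lt i \<Longrightarrow> x \<in> le i" unfolding lt_def le_def by auto
lemma le_lt: "x \<in> le m \<Longrightarrow> m < d \<Longrightarrow> x \<in> lt d" unfolding lt_def le_def by auto
lemma ge_mono: "x \<in> ge m \<Longrightarrow> d \<le> m \<Longrightarrow> x \<in> ge d" unfolding ge_def by auto
lemma ge_0[simp]: "ge 0 = UNIV" unfolding ge_def by auto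
lemma lt_G: "x \<in> lt i \<Longrightarrow> x \<in> G i \<Longrightarrow> x = 0" unfolding lt_def by (auto simp: comp_homog)

lemma lt_repr: "x \<in> lt n \<Longrightarrow> x = (\<Sum>i<n. comp i x)"
  by (rule comp_repr) (auto simp: lt_def not_less[symmetric])

lemma split_ge: "x \<in> ge i \<Longrightarrow> x - comp i x \<in> ge (Suc i)"
  unfolding ge_def by (auto simp: comp_diff comp_comp less_Suc_eq)

definition low :: "nat \<Rightarrow> 'a \<Rightarrow> 'a" where "low n x = (\<Sum>i\<le>n. comp i x)"

lemma comp_low: "comp j (low n x) = (if j \<le> n then comp j x else 0)"
  unfolding low_def comp_sum by (simp add: comp_comp)

lemma low_le: "low n x \<in> le n" unfolding le_def by (auto simp: comp_low)
lemma low_id: "x \<in> le n \<Longrightarrow> low n x = x"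
  unfolding low_def by (rule comp_repr[symmetric]) (auto simp: le_def not_less[symmetric])
lemma low_ge: "x \<in> ge (Suc n) \<Longrightarrow> low n x = 0"
  unfolding low_def ge_def by auto
lemma low_hom: "module_hom scale scale (low n)"
  by (rule module_hom_iff[THEN iffD2])
     (auto simp: low_def comp_add comp_scale mod sum.distrib scale_sum_right)

end



context galg begin

lemma surj_inj_fd:
  assumes F: "finite F" "V \<subseteq> span F" and f: "module_hom scale scale f" and surj: "f ` V = V"
  shows "inj_on f V"
proof -
  obtain B where B: "B \<subseteq> V" "independent B" "V \<subseteq> span B" by (meson basis_exists)
  have finB: "finite B" using independent_span_bound[OF F(1) B(2)] B(1) F(2) by auto
  let ?C = "f ` B"
  have finC: "finite ?C" using finB by simp
  have VC: "V \<subseteq> span ?C"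
    using module_hom.spans_image[OF f B(3)] surj by simp
  have cardC: "card ?C \<le> card B" using finB card_image_le by blast
  have "card B \<le> card ?C" using independent_span_bound[OF finC B(2)] B(1) VC by auto
  then have injB: "inj_on f B" using finB cardC by (simp add: eq_card_imp_inj_on)
  have indC: "independent ?C"
  proof (rule ccontr)
    assume "\<not> independent ?C"
    then obtain a where a: "a \<in> ?C" "a \<in> span (?C - {a})" using dependent_def by blast
    have "?C \<subseteq> span (?C - {a})"
    proof
      fix y assume "y \<in> ?C"
      then show "y \<in> span (?C - {a})"
        using a span_base[of y "?C - {a}"] by (cases "y = a") auto
    qed
    then have "span ?C \<subseteq> span (?C - {a})"
      using span_minimal subspace_span by blast
    then have "B \<subseteq> span (?C - {a})" using B(1) VC by blast
    then have "card B \<le> card (?C - {a})"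
      using independent_span_bound[OF _ B(2)] finC by auto
    moreover have "card (?C - {a}) < card ?C" using a(1) finC by (meson card_Diff1_less)
    ultimately show False using cardC by linarith
  qed
  have "inj_on f (span B)"
    using module_hom.inj_on_span_iff_independent_image[OF f indC] injB by blast
  then show ?thesis using B(3) inj_on_subset by blast
qed

end

lemma subalg_gen_mono:
  assumes "S \<subseteq> subalg_gen scale T" shows "subalg_gen scale S \<subseteq> subalg_gen scale T"
proof
  fix x assume "x \<in> subalg_gen scale S" then show "x \<in> subalg_gen scale T"
    by induct (use assms in \<open>auto intro: subalg_gen.intros\<close>)
qed

primrec Dset :: "'a::ring_1 set \<Rightarrow> nat \<Rightarrow> 'a set" where
  "Dset F 0 = {1}"
| "Dset F (Suc n) = (\<lambda>(a, f). a * f) ` (Dset F n \<times> F)"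

lemma Dset_fin: "finite F \<Longrightarrow> finite (Dset F n)" by (induct n) auto
lemma Dset_1: "Dset F (Suc 0) = F" by force
lemma Dset_mult: "a \<in> Dset F i \<Longrightarrow> b \<in> Dset F j \<Longrightarrow> a * b \<in> Dset F (i + j)"
proof (induct j arbitrary: b)
  case 0 then show ?case by simp
next
  case (Suc j)
  then obtain b' f where "b = b' * f" "b' \<in> Dset F j" "f \<in> F" by auto
  note h = this
  have "a * b' \<in> Dset F (i + j)" using Suc(1)[of b'] Suc(2) h by auto
  moreover have "a * b = (\<lambda>(x, y). x * y) (a * b', f)" using h by (simp add: mult.assoc)
  ultimately show ?case using h(3) by (auto intro!: rev_image_eqI)
qed

locale gr2 = G: grading scale G + H: grading scale H
  for scale :: "'k::field \<Rightarrow> 'a::ring_1 \<Rightarrow> 'a" and G H +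
  assumes G0: "G 0 = range (\<lambda>c. scale c 1)" and H0: "H 0 = range (\<lambda>c. scale c 1)"
    and genG: "subalg_gen scale (G 1) = UNIV" and genH: "subalg_gen scale (H 1) = UNIV"
begin

lemma swap: "gr2 scale H G"
  using gr2_axioms unfolding gr2_def gr2_axioms_def by blast

end




context grading begin
lemma le_mono: "x \<in> le m \<Longrightarrow> m \<le> n \<Longrightarrow> x \<in> le n" unfolding le_def by auto
end

context gr2 begin

lemma G0H0: "G 0 = H 0" using G0 H0 by simp

lemma scal_gen: "scale c 1 \<in> subalg_gen scale S"
  by (intro subalg_gen.smult subalg_gen.one)

lemma exist: "\<exists>p t. p \<in> G.lt d \<and> t \<in> H.ge d \<and> x = p + t"
proof -
  define Z where "Z = {z. \<exists>m. z \<in> G.le m \<and> z \<in> H.ge m}"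
  define Y where "Y = {g - H.comp 0 g | g. g \<in> G 1}"
  have ZZ: "z * z' \<in> Z" if "z \<in> Z" "z' \<in> Z" for z z'
    using that unfolding Z_def by (blast intro: G.mult_le H.mult_ge)
  have YZ: "subalg_gen scale Y \<subseteq> G.span Z"
  proof
    fix x assume "x \<in> subalg_gen scale Y" then show "x \<in> G.span Z"
    proof induct
      case (gen x)
      then obtain g where g: "x = g - H.comp 0 g" "g \<in> G 1" unfolding Y_def by auto
      have "H.comp 0 g \<in> G 0" using G0H0 H.comp_in by simp
      then have "H.comp 0 g \<in> G.le 1" using G.G_le G.le_mono by blast
      moreover have "g \<in> G.le 1" using g(2) G.G_le by blast
      ultimately have "x \<in> G.le 1" using g(1) G.subspace_diff[OF G.sub_le] by blast
      moreover have "x \<in> H.ge 1" unfolding H.ge_def using g(1) by (auto simp: H.comp_diff H.comp_comp)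
      ultimately show ?case unfolding Z_def by (blast intro: G.span_base)
    next
      case one
      have "1 \<in> Z" unfolding Z_def using G.G_le[OF G.G_one] by auto
      then show ?case by (rule G.span_base)
    next
      case zero then show ?case by (rule G.span_zero)
    next
      case (add x y) then show ?case by (simp add: G.span_add)
    next
      case (mult x y) then show ?case
        using G.span_mult_closed[of x Z y Z Z] ZZ G.span_base by blast
    next
      case (smult x c) then show ?case by (simp add: G.span_scale)
    qed
  qed
  have "G 1 \<subseteq> subalg_gen scale Y"
  proof
    fix g assume g: "g \<in> G 1"
    have 1: "g - H.comp 0 g \<in> subalg_gen scale Y"
      by (rule subalg_gen.gen) (use g in \<open>auto simp: Y_def\<close>)
    have "H.comp 0 g \<in> range (\<lambda>c. scale c 1)" using H0 H.comp_in[of 0 g] by simp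
    then obtain c where "H.comp 0 g = scale c 1" by blast
    then have 2: "H.comp 0 g \<in> subalg_gen scale Y" using scal_gen by simp
    have "(g - H.comp 0 g) + H.comp 0 g \<in> subalg_gen scale Y"
      by (rule subalg_gen.add[OF 1 2])
    then show "g \<in> subalg_gen scale Y" by simp
  qed
  then have "subalg_gen scale (G 1) \<subseteq> subalg_gen scale Y" by (rule subalg_gen_mono)
  then have xZ: "x \<in> G.span Z" using genG YZ by blast
  let ?P = "{p + t |p t. p \<in> G.lt d \<and> t \<in> H.ge d}"
  have subP: "G.subspace ?P" by (rule G.subspace_sums[OF G.sub_lt H.sub_ge])
  have "Z \<subseteq> ?P"
  proof
    fix z assume "z \<in> Z"
    then obtain m where m: "z \<in> G.le m" "z \<in> H.ge m" unfolding Z_def by auto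
    show "z \<in> ?P"
    proof (cases "m < d")
      case True
      then have "z \<in> G.lt d" using G.le_lt m by blast
      moreover have "0 \<in> H.ge d" by (rule G.subspace_0[OF H.sub_ge])
      ultimately have "z = z + 0 \<and> z \<in> G.lt d \<and> 0 \<in> H.ge d" by simp
      then show ?thesis by blast
    next
      case False
      then have "z \<in> H.ge d" using H.ge_mono m by (meson not_less)
      moreover have "0 \<in> G.lt d" by (rule G.subspace_0[OF G.sub_lt])
      ultimately have "z = 0 + z \<and> 0 \<in> G.lt d \<and> z \<in> H.ge d" by simp
      then show ?thesis by blast
    qed
  qed
  then have "G.span Z \<subseteq> ?P" using G.span_minimal subP by blast
  then show ?thesis using xZ by blast
qed

lemma exist_swap: "\<exists>p t. p \<in> H.lt d \<and> t \<in> G.ge d \<and> x = p + t"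
proof -
  interpret sw: gr2 scale H G by (rule swap)
  show ?thesis by (rule sw.exist)
qed

lemma fd_le:
  assumes fd: "fin_dim scale (G 1)"
  shows "\<exists>F. finite F \<and> G.le n \<subseteq> G.span F"
proof -
  obtain F where F: "finite F" "F \<subseteq> G 1" "G 1 \<subseteq> G.span F" using fd unfolding fin_dim_def by blast
  define Z where "Z = {z. \<exists>m. z \<in> G m \<and> z \<in> G.span (Dset F m)}"
  have ZZ: "z * z' \<in> Z" if zZ: "z \<in> Z" "z' \<in> Z" for z z'
  proof -
    obtain i where i: "z \<in> G i" "z \<in> G.span (Dset F i)" using zZ(1) unfolding Z_def by blast
    obtain j where j: "z' \<in> G j" "z' \<in> G.span (Dset F j)" using zZ(2) unfolding Z_def by blast
    note ij = i j
    have "z * z' \<in> G.span (Dset F (i + j))"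
      by (rule G.span_mult_closed[OF ij(2) ij(4)]) (blast intro: G.span_base Dset_mult)
    then show ?thesis unfolding Z_def using G.G_mult[OF ij(1) ij(3)] by blast
  qed
  have sZ: "subalg_gen scale (G 1) \<subseteq> G.span Z"
  proof
    fix x assume "x \<in> subalg_gen scale (G 1)" then show "x \<in> G.span Z"
    proof induct
      case (gen x)
      have "x \<in> G.span (Dset F 1)" using gen F(3) Dset_1[of F] by auto
      then have "x \<in> Z" unfolding Z_def using gen by blast
      then show ?case by (rule G.span_base)
    next
      case one
      have "1 \<in> Z" unfolding Z_def using G.G_one G.span_base[of 1 "{1}"] by auto
      then show ?case by (rule G.span_base)
    next
      case zero then show ?case by (rule G.span_zero)
    next
      case (add x y) then show ?case by (simp add: G.span_add)
    next
      case (mult x y) then show ?case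
        using G.span_mult_closed[of x Z y Z Z] ZZ G.span_base by blast
    next
      case (smult x c) then show ?case by (simp add: G.span_scale)
    qed
  qed
  have Gi: "G i \<subseteq> G.span (Dset F i)" for i
  proof
    fix x assume x: "x \<in> G i"
    have "x \<in> G.span Z" using sZ genG by blast
    then have "G.comp i x \<in> G.span (Dset F i)"
    proof (induct rule: G.span_induct)
      case base show ?case
        by (rule G.subspaceI) (auto simp: G.comp_add G.comp_scale G.span_add G.span_scale G.span_zero)
    next
      case (step z)
      then obtain m where "z \<in> G m" "z \<in> G.span (Dset F m)" unfolding Z_def by auto
      then show ?case by (auto simp: G.comp_homog G.span_zero)
    qed
    then show "x \<in> G.span (Dset F i)" using G.comp_homog[OF x, of i] by simp
  qed
  let ?F = "\<Union>i\<le>n. Dset F i"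
  have "finite ?F" using Dset_fin F(1) by auto
  moreover have "G.le n \<subseteq> G.span ?F"
  proof
    fix x assume "x \<in> G.le n"
    then have "x = (\<Sum>i\<le>n. G.comp i x)" using G.low_id unfolding G.low_def by simp
    moreover have "(\<Sum>i\<le>n. G.comp i x) \<in> G.span ?F"
    proof (rule G.span_sum)
      fix i assume "i \<in> {..n}"
      then have "G.span (Dset F i) \<subseteq> G.span ?F" by (intro G.span_mono) auto
      then show "G.comp i x \<in> G.span ?F" using Gi G.comp_in by blast
    qed
    ultimately show "x \<in> G.span ?F" by simp
  qed
  ultimately show ?thesis by blast
qed

lemma transfer:
  assumes fin: "\<And>n. \<exists>F. finite F \<and> G.le n \<subseteq> G.span F"
  shows "\<exists>F. finite F \<and> H.le n \<subseteq> G.span F"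
proof -
  obtain F where F: "finite F" "G.le n \<subseteq> G.span F" using fin by blast
  have "H.le n \<subseteq> G.span (H.low n ` F)"
  proof
    fix h assume h: "h \<in> H.le n"
    obtain p t where pt: "p \<in> G.lt (Suc n)" "t \<in> H.ge (Suc n)" "h = p + t" using exist by blast
    have "h = H.low n h" using H.low_id h by simp
    also have "\<dots> = H.low n p + H.low n t" using pt(3) module_hom.add[OF H.low_hom] by simp
    also have "\<dots> = H.low n p" using H.low_ge pt(2) by simp
    finally have "h = H.low n p" .
    moreover have "p \<in> G.span F" using pt(1) F(2) G.lt_Suc by auto
    ultimately show "h \<in> G.span (H.low n ` F)"
      using module_hom.spans_image[OF H.low_hom, of "{p}" F] by auto
  qed
  then show ?thesis using F(1) by blast
qed

lemma key:
  assumes fin: "\<And>n. \<exists>F. finite F \<and> G.le n \<subseteq> G.span F"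
    and x: "x \<in> G.lt d" "x \<in> H.ge d"
  shows "x = 0"
proof (cases d)
  case 0 then show ?thesis using G.lt_0 x by simp
next
  case (Suc n)
  define f where "f = G.low n \<circ> H.low n"
  have fh: "module_hom scale scale f"
    unfolding f_def by (rule module_hom_compose[OF H.low_hom G.low_hom])
  obtain F where F: "finite F" "G.le n \<subseteq> G.span F" using fin by blast
  have "f ` G.le n = G.le n"
  proof
    show "f ` G.le n \<subseteq> G.le n" unfolding f_def using G.low_le by auto
    show "G.le n \<subseteq> f ` G.le n"
    proof
      fix g assume g: "g \<in> G.le n"
      obtain h g' where hg: "h \<in> H.lt (Suc n)" "g' \<in> G.ge (Suc n)" "g = h + g'" using exist_swap by blast
      have "g = G.low n g" using G.low_id g by simp
      also have "\<dots> = G.low n h + G.low n g'" using hg(3) module_hom.add[OF G.low_hom] by simp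
      also have "\<dots> = G.low n h" using G.low_ge hg(2) by simp
      finally have g1: "g = G.low n h" .
      obtain g'' h' where gh: "g'' \<in> G.lt (Suc n)" "h' \<in> H.ge (Suc n)" "h = g'' + h'" using exist by blast
      have "h = H.low n h" using H.low_id hg(1) H.lt_Suc by simp
      also have "\<dots> = H.low n g'' + H.low n h'" using gh(3) module_hom.add[OF H.low_hom] by simp
      also have "\<dots> = H.low n g''" using H.low_ge gh(2) by simp
      finally have "G.low n (H.low n g'') = g" using g1 by simp
      then have "f g'' = g" unfolding f_def by simp
      moreover have "g'' \<in> G.le n" using gh(1) G.lt_Suc by simp
      ultimately show "g \<in> f ` G.le n" by blast
    qed
  qed
  then have inj: "inj_on f (G.le n)" by (rule G.surj_inj_fd[OF F fh])
  have x1: "x \<in> G.le n" using x(1) Suc G.lt_Suc by simp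
  have "f x = 0" unfolding f_def using H.low_ge x(2) Suc module_hom.zero[OF G.low_hom] by simp
  moreover have "f 0 = 0" using module_hom.zero[OF fh] .
  moreover have "0 \<in> G.le n" by (rule G.subspace_0[OF G.sub_le])
  ultimately have "f x = f 0" "0 \<in> G.le n" by simp_all
  then show ?thesis using inj_onD[OF inj _ x1] by blast
qed

end



context grading begin

lemma ge_zero: "z \<in> ge m \<Longrightarrow> k < m \<Longrightarrow> comp k z = 0" unfolding ge_def by auto

lemma comp_ge_mult:
  assumes x: "x \<in> ge i" and y: "y \<in> ge j"
  shows "comp (i + j) (x * y) = comp i x * comp j y"
proof -
  define x' where "x' = x - comp i x"
  define y' where "y' = y - comp j y"
  have x': "x' \<in> ge (Suc i)" unfolding x'_def by (rule split_ge[OF x])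
  have y': "y' \<in> ge (Suc j)" unfolding y'_def by (rule split_ge[OF y])
  have e: "x * y = comp i x * comp j y + (comp i x * y' + x' * comp j y + x' * y')"
    unfolding x'_def y'_def by (simp add: algebra_simps)
  have z1: "comp (i + j) (comp i x * y') = 0"
    by (rule ge_zero[OF mult_ge[OF G_ge[OF comp_in] y']]) simp
  have z2: "comp (i + j) (x' * comp j y) = 0"
    by (rule ge_zero[OF mult_ge[OF x' G_ge[OF comp_in]]]) simp
  have z3: "comp (i + j) (x' * y') = 0"
    by (rule ge_zero[OF mult_ge[OF x' y']]) simp
  have "comp (i + j) (x * y) = comp (i + j) (comp i x * comp j y)"
    unfolding e comp_add z1 z2 z3 by simp
  also have "\<dots> = comp i x * comp j y"
    using comp_homog[OF G_mult[OF comp_in comp_in], of "i + j"] by simp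
  finally show ?thesis .
qed

end

locale gr3 = gr2 scale G H for scale :: "'k::field \<Rightarrow> 'a::ring_1 \<Rightarrow> 'a" and G H +
  assumes key: "\<And>x d. x \<in> G.lt d \<Longrightarrow> x \<in> H.ge d \<Longrightarrow> x = 0"
begin

definition T :: "nat \<Rightarrow> 'a \<Rightarrow> 'a" where
  "T d x = (THE t. t \<in> H.ge d \<and> x - t \<in> G.lt d)"

lemma T_ex1: "\<exists>!t. t \<in> H.ge d \<and> x - t \<in> G.lt d"
proof -
  obtain p t where pt: "p \<in> G.lt d" "t \<in> H.ge d" "x = p + t" using exist by blast
  have "t \<in> H.ge d \<and> x - t \<in> G.lt d" using pt by simp
  moreover have "t' = t" if "t' \<in> H.ge d \<and> x - t' \<in> G.lt d" for t'
  proof -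
    have "t' - t \<in> H.ge d" using that pt(2) G.subspace_diff[OF H.sub_ge] by blast
    moreover have "(x - t) - (x - t') \<in> G.lt d"
      using that pt G.subspace_diff[OF G.sub_lt] by (metis add_diff_cancel_right')
    moreover have "(x - t) - (x - t') = t' - t" by simp
    ultimately show ?thesis using key by fastforce
  qed
  ultimately show ?thesis by blast
qed

lemma T_spec: "T d x \<in> H.ge d" "x - T d x \<in> G.lt d"
  using theI'[OF T_ex1[of d x]] unfolding T_def by auto

lemma T_unique: "t \<in> H.ge d \<Longrightarrow> x - t \<in> G.lt d \<Longrightarrow> T d x = t"
  unfolding T_def by (rule the1_equality[OF T_ex1]) auto

lemma T_add: "T d (x + y) = T d x + T d y"
proof (rule T_unique)
  show "T d x + T d y \<in> H.ge d" using T_spec G.subspace_add[OF H.sub_ge] by blast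
  have "(x - T d x) + (y - T d y) \<in> G.lt d" using T_spec G.subspace_add[OF G.sub_lt] by blast
  then show "x + y - (T d x + T d y) \<in> G.lt d" by (simp add: algebra_simps)
qed

lemma T_scale: "T d (scale c x) = scale c (T d x)"
proof (rule T_unique)
  show "scale c (T d x) \<in> H.ge d" using T_spec G.subspace_scale[OF H.sub_ge] by blast
  have "scale c (x - T d x) \<in> G.lt d" using T_spec G.subspace_scale[OF G.sub_lt] by blast
  then show "scale c x - scale c (T d x) \<in> G.lt d" by (simp add: G.scale_right_diff_distrib)
qed

lemma T_zero[simp]: "T d 0 = 0"
  using T_add[of d 0 0] by simp

lemma T_le: assumes "a \<in> G i" shows "T i a \<in> G.le i"
proof -
  have "a - (a - T i a) \<in> G.le i"
    using G.subspace_diff[OF G.sub_le G.G_le[OF assms] G.lt_le[OF T_spec(2)]] .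
  then show ?thesis by simp
qed

lemma T_mult:
  assumes a: "a \<in> G i" and b: "b \<in> G j"
  shows "T (i + j) (a * b) = T i a * T j b"
proof (rule T_unique)
  show "T i a * T j b \<in> H.ge (i + j)" by (rule H.mult_ge[OF T_spec(1) T_spec(1)])
  have 1: "(a - T i a) * b \<in> G.lt (i + j)" by (rule G.mult_lt_le[OF T_spec(2) G.G_le[OF b]])
  have 2: "T i a * (b - T j b) \<in> G.lt (i + j)" by (rule G.mult_le_lt[OF T_le[OF a] T_spec(2)])
  have "(a - T i a) * b + T i a * (b - T j b) \<in> G.lt (i + j)"
    using G.subspace_add[OF G.sub_lt 1 2] .
  then show "a * b - T i a * T j b \<in> G.lt (i + j)" by (simp add: algebra_simps)
qed

definition phid :: "nat \<Rightarrow> 'a \<Rightarrow> 'a" where "phid d a = H.comp d (T d a)"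

lemma phid_in: "phid d a \<in> H d" unfolding phid_def by simp
lemma phid_zero[simp]: "phid d 0 = 0" unfolding phid_def by simp
lemma phid_add: "phid d (x + y) = phid d x + phid d y" unfolding phid_def by (simp add: T_add H.comp_add)
lemma phid_scale: "phid d (scale c x) = scale c (phid d x)" unfolding phid_def by (simp add: T_scale H.comp_scale)

definition phi :: "'a \<Rightarrow> 'a" where
  "phi x = (\<Sum>d\<in>{d. G.comp d x \<noteq> 0}. phid d (G.comp d x))"

lemma phi_sum: assumes "finite S" "{d. G.comp d x \<noteq> 0} \<subseteq> S"
  shows "phi x = (\<Sum>d\<in>S. phid d (G.comp d x))"
  unfolding phi_def by (rule sum.mono_neutral_left) (use assms in auto)

lemma phi_add: "phi (x + y) = phi x + phi y"
proof -
  let ?S = "{d. G.comp d x \<noteq> 0} \<union> {d. G.comp d y \<noteq> 0} \<union> {d. G.comp d (x + y) \<noteq> 0}"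
  have fin: "finite ?S" using G.supp_fin by auto
  have "phi (x + y) = (\<Sum>d\<in>?S. phid d (G.comp d (x + y)))" by (rule phi_sum[OF fin]) auto
  also have "\<dots> = (\<Sum>d\<in>?S. phid d (G.comp d x)) + (\<Sum>d\<in>?S. phid d (G.comp d y))"
    by (simp add: G.comp_add phid_add sum.distrib)
  also have "\<dots> = phi x + phi y"
  proof -
    have hx: "phi x = (\<Sum>d\<in>?S. phid d (G.comp d x))" by (rule phi_sum[OF fin]) auto
    have hy: "phi y = (\<Sum>d\<in>?S. phid d (G.comp d y))" by (rule phi_sum[OF fin]) auto
    show ?thesis by (simp add: hx hy)
  qed
  finally show ?thesis .
qed

lemma phi_scale: "phi (scale c x) = scale c (phi x)"
proof -
  let ?S = "{d. G.comp d x \<noteq> 0} \<union> {d. G.comp d (scale c x) \<noteq> 0}"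
  have fin: "finite ?S" using G.supp_fin by auto
  have "phi (scale c x) = (\<Sum>d\<in>?S. phid d (G.comp d (scale c x)))" by (rule phi_sum[OF fin]) auto
  also have "\<dots> = scale c (\<Sum>d\<in>?S. phid d (G.comp d x))"
    by (simp add: G.comp_scale phid_scale G.scale_sum_right)
  also have "\<dots> = scale c (phi x)"
  proof -
    have hx: "phi x = (\<Sum>d\<in>?S. phid d (G.comp d x))" by (rule phi_sum[OF fin]) auto
    show ?thesis by (simp add: hx)
  qed
  finally show ?thesis .
qed

lemma phi_zero[simp]: "phi 0 = 0" using phi_add[of 0 0] by simp

lemma phi_sumf: "phi (sum f A) = (\<Sum>a\<in>A. phi (f a))"
  by (induct A rule: infinite_finite_induct) (auto simp: phi_add)

lemma phi_homog: assumes "a \<in> G i" shows "phi a = phid i a"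
proof -
  have "phi a = (\<Sum>d\<in>{i}. phid d (G.comp d a))"
    by (rule phi_sum) (auto simp: G.comp_homog[OF assms])
  then show ?thesis by (simp add: G.comp_homog[OF assms])
qed

lemma phi_mult_homog:
  assumes a: "a \<in> G i" and b: "b \<in> G j"
  shows "phi (a * b) = phi a * phi b"
proof -
  have "phi (a * b) = H.comp (i + j) (T i a * T j b)"
    using phi_homog[OF G.G_mult[OF a b]] T_mult[OF a b] unfolding phid_def by simp
  also have "\<dots> = H.comp i (T i a) * H.comp j (T j b)"
    by (rule H.comp_ge_mult[OF T_spec(1) T_spec(1)])
  also have "\<dots> = phi a * phi b" using phi_homog[OF a] phi_homog[OF b] unfolding phid_def by simp
  finally show ?thesis .
qed

lemma phi_mult: "phi (x * y) = phi x * phi y"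
proof -
  let ?S = "{d. G.comp d x \<noteq> 0}" and ?T = "{d. G.comp d y \<noteq> 0}"
  have "x * y = (\<Sum>i\<in>?S. G.comp i x) * (\<Sum>j\<in>?T. G.comp j y)"
    using G.comp_repr[OF G.supp_fin order_refl, of x] G.comp_repr[OF G.supp_fin order_refl, of y] by simp
  also have "\<dots> = (\<Sum>i\<in>?S. \<Sum>j\<in>?T. G.comp i x * G.comp j y)" by (rule sum_product)
  finally have "phi (x * y) = (\<Sum>i\<in>?S. \<Sum>j\<in>?T. phi (G.comp i x) * phi (G.comp j y))"
    by (simp add: phi_sumf phi_mult_homog[OF G.comp_in G.comp_in])
  also have "\<dots> = (\<Sum>i\<in>?S. phi (G.comp i x)) * (\<Sum>j\<in>?T. phi (G.comp j y))"
    by (rule sum_product[symmetric])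
  also have "\<dots> = phi x * phi y"
    using G.comp_repr[OF G.supp_fin order_refl, of x] G.comp_repr[OF G.supp_fin order_refl, of y]
    by (metis phi_sumf)
  finally show ?thesis .
qed

lemma phi_one: "phi 1 = 1"
proof -
  have T1: "T 0 1 = 1" by (rule T_unique) (auto simp: G.subspace_0[OF G.sub_lt])
  have "H.comp 0 (1::'a) = 1" using H.comp_homog[OF H.G_one] by simp
  then show ?thesis using phi_homog[OF G.G_one] T1 unfolding phid_def by simp
qed

lemma comp_phi: "H.comp k (phi x) = phid k (G.comp k x)"
proof -
  let ?S = "{d. G.comp d x \<noteq> 0}"
  have "phi x = (\<Sum>d\<in>?S. phid d (G.comp d x))" by (rule phi_sum) (auto simp: G.supp_fin)
  then show ?thesis
    by (intro H.comp_unique[of ?S]) (auto simp: G.supp_fin phid_in)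
qed

lemma phid_inj: assumes a: "a \<in> G k" and z: "phid k a = 0" shows "a = 0"
proof -
  have t1: "T k a \<in> H.ge (Suc k)"
    using T_spec(1)[of k a] z unfolding phid_def H.ge_def by (auto simp: less_Suc_eq)
  have "T k a \<in> G.lt (Suc k)" using T_le[OF a] G.lt_Suc by simp
  then have "T k a = 0" using key t1 by blast
  then have "a \<in> G.lt k" using T_spec(2)[of a k] by simp
  then show ?thesis using G.lt_G a by blast
qed

lemma phi_inj: "inj phi"
proof (rule injI)
  fix x y assume "phi x = phi y"
  then have "phi (x - y) = 0" using phi_add[of "x - y" y] by simp
  then have "\<And>k. G.comp k (x - y) = 0"
    using comp_phi phid_inj G.comp_in by (metis H.comp_zero)
  then have "x - y = 0" by (rule G.all_zero)
  then show "x = y" by simp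
qed

lemma H1_range: "H 1 \<subseteq> range phi"
proof
  fix y assume y: "y \<in> H 1"
  obtain p t where pt: "p \<in> G.lt 2" "t \<in> H.ge 2" "y = p + t" using exist by blast
  define g1 where "g1 = G.comp 1 p"
  have "p = (\<Sum>i<2. G.comp i p)" by (rule G.lt_repr[OF pt(1)])
  also have "\<dots> = G.comp 0 p + g1" unfolding g1_def by (simp add: numeral_2_eq_2)
  finally have p: "p = G.comp 0 p + g1" .
  have g0: "H.comp 1 (G.comp 0 p) = 0"
    using H.comp_homog[of "G.comp 0 p" 0 1] G0H0 G.comp_in[of 0 p] by simp
  have "y = H.comp 1 y" using H.comp_homog[OF y] by simp
  also have "\<dots> = H.comp 1 g1"
  proof -
    have "H.comp 1 p = H.comp 1 (G.comp 0 p + g1)" using p by simp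
    then have hp: "H.comp 1 p = H.comp 1 g1" using g0 by (simp add: H.comp_add)
    have "H.comp 1 t = 0" using pt(2) unfolding H.ge_def by simp
    then show ?thesis unfolding pt(3) H.comp_add hp by simp
  qed
  finally have y1: "y = H.comp 1 g1" .
  have q: "g1 - T 1 g1 \<in> G.lt 1" by (rule T_spec)
  have "g1 - T 1 g1 = (\<Sum>i<1. G.comp i (g1 - T 1 g1))" by (rule G.lt_repr[OF q])
  also have "\<dots> = G.comp 0 (g1 - T 1 g1)" by simp
  finally have e: "g1 - T 1 g1 = G.comp 0 (g1 - T 1 g1)" .
  have "g1 - T 1 g1 \<in> G 0" by (subst e) (rule G.comp_in)
  then have "H.comp 1 (g1 - T 1 g1) = 0" using H.comp_homog G0H0 by simp
  then have "H.comp 1 (T 1 g1) = H.comp 1 g1" by (simp add: H.comp_diff)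
  then have "phi g1 = y" using phi_homog[of g1 1] y1 unfolding g1_def phid_def by simp
  then show "y \<in> range phi" by blast
qed

lemma phi_surj: "surj phi"
proof -
  have "subalg_gen scale (H 1) \<subseteq> range phi"
  proof
    fix x assume "x \<in> subalg_gen scale (H 1)" then show "x \<in> range phi"
    proof induct
      case (gen x) then show ?case using H1_range by blast
    next
      case one then show ?case by (rule range_eqI[of _ _ 1]) (simp add: phi_one)
    next
      case zero then show ?case by (rule range_eqI[of _ _ 0]) simp
    next
      case (add x y)
      then obtain a b where "x = phi a" "y = phi b" by blast
      then show ?case by (intro range_eqI[of _ _ "a + b"]) (simp add: phi_add)
    next
      case (mult x y)
      then obtain a b where "x = phi a" "y = phi b" by blast
      then show ?case by (intro range_eqI[of _ _ "a * b"]) (simp add: phi_mult)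
    next
      case (smult x c)
      then obtain a where "x = phi a" by blast
      then show ?case by (intro range_eqI[of _ _ "scale c a"]) (simp add: phi_scale)
    qed
  qed
  then show ?thesis using genH by auto
qed

lemma phi_image: "phi ` G i = H i"
proof
  show "phi ` G i \<subseteq> H i" using phi_homog phid_in by auto
  show "H i \<subseteq> phi ` G i"
  proof
    fix y assume y: "y \<in> H i"
    obtain x where x: "y = phi x" using phi_surj by (metis surjD)
    have "y = H.comp i y" using H.comp_homog[OF y] by simp
    also have "\<dots> = phi (G.comp i x)" unfolding x comp_phi by (simp add: phi_homog[OF G.comp_in])
    finally show "y \<in> phi ` G i" by simp
  qed
qed

lemma phi_aut: "alg_automorphism scale phi"
  unfolding alg_automorphism_def
  using phi_inj phi_surj phi_one phi_add phi_mult phi_scale by (auto simp: bij_def)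

end



theorem corollary2:
  fixes scale :: "'k::field \<Rightarrow> 'a::ring_1 \<Rightarrow> 'a"
    and A B :: "nat \<Rightarrow> 'a set"
  assumes alg: "k_algebra scale"
    and gradA: "graded_decomp scale A"
    and gradB: "graded_decomp scale B"
    and A0: "A 0 = range (\<lambda>c. scale c 1)"
    and B0: "B 0 = range (\<lambda>c. scale c 1)"
    and genA: "subalg_gen scale (A 1) = UNIV"
    and genB: "subalg_gen scale (B 1) = UNIV"
    and fd: "fin_dim scale (A 1) \<or> fin_dim scale (B 1)"
  shows "\<exists>\<phi>. alg_automorphism scale \<phi> \<and> (\<forall>i. \<phi> ` A i = B i)"
proof -
  have ga: "galg scale"
    using alg unfolding k_algebra_def galg_def galg_axioms_def module_iff_vector_space by blast
  have g2: "gr2 scale A B"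
    using ga gradA gradB A0 B0 genA genB
    unfolding gr2_def gr2_axioms_def grading_def grading_axioms_def by blast
  interpret I: gr2 scale A B by (rule g2)
  interpret S: gr2 scale B A by (rule I.swap)
  have fin: "\<exists>F. finite F \<and> I.G.le n \<subseteq> I.G.span F" for n
    using fd
  proof
    assume "fin_dim scale (A 1)" then show ?thesis by (rule I.fd_le)
  next
    assume "fin_dim scale (B 1)"
    then have "\<And>n. \<exists>F. finite F \<and> I.H.le n \<subseteq> I.G.span F" by (rule S.fd_le)
    then show ?thesis by (rule S.transfer)
  qed
  have g3: "gr3 scale A B"
    using g2 I.key[OF fin] unfolding gr3_def gr3_axioms_def by blast
  interpret J: gr3 scale A B by (rule g3)
  show ?thesis using J.phi_aut J.phi_image by blast
qed


end
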